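(* Let $\mathbf{M}\in\mathbb{R}^{n\times n}$ be symmetric positive definite, let $V=\{1,\dots,n\}$, and let $P(V)$ be a partition of $V$ into disjoint nonempty blocks. Fix a block $B\in P(V)$. Let $N_1,\dots,N_g\in P(V)\setminus\{B\}$ be the blocks $D$ with $\mathbf{M}_{BD}\neq 0$, put $N=N_1\cup\dots\cup N_g$, and let $W=V\setminus(B\cup N)$ (so $\mathbf{M}_{BW}=0$). Let $\mathbf{\Pi}\in\mathbb{R}^{n\times \pi}$ be any matrix. Let $\mathbf{M}_{BB}=\mathbf{L}\mathbf{L}^T$ be the Cholesky factorization, set $\widehat{\mathbf{M}}_{BN_j}=\mathbf{L}^{-1}\mathbf{M}_{BN_j}$, $\widehat{\mathbf{M}}_{BN}=\mathbf{L}^{-1}\mathbf{M}_{BN}$, $\widehat{\mathbf{M}}_{NB}=\widehat{\mathbf{M}}_{BN}^T$, $\mathbf{\Phi}_B=\mathbf{\Pi}(B,:)$, $\mathbf{\Phi}_{N_j}=\mathbf{\Pi}(N_j,:)$, and define the $|B|\times (g+1)\pi$ matrix $$\mathbf{N}=\begin{pmatrix}\mathbf{L}^T\mathbf{\Phi}_B & \widehat{\mathbf{M}}_{BN_1}\mathbf{\Phi}_{N_1} & \cdots & \widehat{\mathbf{M}}_{BN_g}\mathbf{\Phi}_{N_g}\end{pmatrix}.$$ Let $\mathbf{Q}=(\mathbf{Q}_1\ \mathbf{Q}_2)$ be an orthogonal $|B|\times|B|$ matrix whose first block of columns $\mathbf{Q}_1$ is an orthonormal basis of the range of $\mathbf{N}$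 (and $\mathbf{Q}_2$ an orthonormal basis of its orthogonal complement). With the variables ordered as $(B,N,W)$ and the $B$-block further split according to $(\mathbf{Q}_1,\mathbf{Q}_2)$, define $$\mathbf{\mathcal{B}}=\begin{pmatrix}\mathbf{L}\mathbf{Q} & \\ & \mathbf{I}\end{pmatrix},\qquad \mathbf{M}_{(+)}=\begin{pmatrix}\mathbf{I} & 0 & \mathbf{Q}_1^T\widehat{\mathbf{M}}_{BN} & 0\\ 0 & \mathbf{I} & 0 & 0\\ \widehat{\mathbf{M}}_{NB}\mathbf{Q}_1 & 0 & \mathbf{M}_{NN} & \mathbf{M}_{NW}\\ 0 & 0 & \mathbf{M}_{WN} & \mathbf{M}_{WW}\end{pmatrix},\qquad \widetilde{\mathbf{M}}=\mathbf{\mathcal{B}}\,\mathbf{M}_{(+)}\,\mathbf{\mathcal{B}}^T.$$ Then for every block $D\in P(V)$ we have $\mathbf{M}\mathbf{\Pi}_D=\widetilde{\mathbf{M}}\mathbf{\Pi}_D$, where $\mathbf{\Pi}_D\in\mathbb{R}^{n\times\pi}$ is defined by $(\mathbf{\Pi}_D)_{ij}=\mathbf{\Pi}_{ij}$ if $i\in D$ and $0$ otherwise. Moreover, $\widetilde{\mathbf{M}}$ is symmetric positive definite.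
   Context: In the application, the columns of $\mathbf{\Pi}$ are discretized polynomials of the grid coordinates (e.g. $\mathbf{\Pi}=\mathbf{\Pi}^0$ the all-ones vector, or $\mathbf{\Pi}^1$ with rows $(1,x_i,y_i,z_i)$), but the statement holds for any $\mathbf{\Pi}$. For index sets $S,T$, $\mathbf{M}_{ST}$ denotes the submatrix of $\mathbf{M}$ with rows in $S$ and columns in $T$, and $\mathbf{\Pi}(S,:)$ the rows of $\mathbf{\Pi}$ indexed by $S$. *)

theory Defs
  imports Complex_Main
begin

text \<open>Matrices are represented as functions nat \<Rightarrow> nat \<Rightarrow> real; an n\<times>n matrix is
  the restriction to V = {0..<n}. Submatrices M_ST are the restrictions to S \<times> T.\<close>

definition partition_of :: "nat set \<Rightarrow> nat set set \<Rightarrow> bool" where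
  "partition_of V P \<longleftrightarrow> (\<forall>D\<in>P. D \<noteq> {} \<and> D \<subseteq> V) \<and>
     (\<forall>D\<in>P. \<forall>E\<in>P. D \<noteq> E \<longrightarrow> D \<inter> E = {}) \<and> \<Union>P = V"

definition symmetric_on :: "nat set \<Rightarrow> (nat \<Rightarrow> nat \<Rightarrow> real) \<Rightarrow> bool" where
  "symmetric_on V A \<longleftrightarrow> (\<forall>i\<in>V. \<forall>j\<in>V. A i j = A j i)"

definition spd_on :: "nat set \<Rightarrow> (nat \<Rightarrow> nat \<Rightarrow> real) \<Rightarrow> bool" where
  "spd_on V A \<longleftrightarrow> symmetric_on V A \<and>
     (\<forall>x. (\<exists>i\<in>V. x i \<noteq> 0) \<longrightarrow> (\<Sum>i\<in>V. \<Sum>j\<in>V. x i * A i j * x j) > 0)"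

definition in_range :: "'r set \<Rightarrow> 'c set \<Rightarrow> ('r \<Rightarrow> 'c \<Rightarrow> real) \<Rightarrow> ('r \<Rightarrow> real) \<Rightarrow> bool" where
  "in_range R C A v \<longleftrightarrow> (\<exists>x. \<forall>i\<in>R. v i = (\<Sum>j\<in>C. A i j * x j))"

definition nbr_blocks :: "nat set set \<Rightarrow> nat set \<Rightarrow> (nat \<Rightarrow> nat \<Rightarrow> real) \<Rightarrow> nat set set" where
  "nbr_blocks P B M = {D\<in>P. D \<noteq> B \<and> (\<exists>i\<in>B. \<exists>j\<in>D. M i j \<noteq> 0)}"

definition nbr_set :: "nat set set \<Rightarrow> nat set \<Rightarrow> (nat \<Rightarrow> nat \<Rightarrow> real) \<Rightarrow> nat set" where
  "nbr_set P B M = \<Union>(nbr_blocks P B M)"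

definition Mhat :: "nat set \<Rightarrow> (nat \<Rightarrow> nat \<Rightarrow> real) \<Rightarrow> (nat \<Rightarrow> nat \<Rightarrow> real) \<Rightarrow> nat \<Rightarrow> nat \<Rightarrow> real" where
  "Mhat B Linv M i j = (\<Sum>k\<in>B. Linv i k * M k j)"

text \<open>The matrix N = (L^T Phi_B | Mhat_BN1 Phi_N1 | ... | Mhat_BNg Phi_Ng): rows indexed by B,
  columns indexed by pairs (D, c) with D \<in> {B} \<union> {N_1..N_g} and c < pi.\<close>
definition Nmat :: "nat set \<Rightarrow> (nat \<Rightarrow> nat \<Rightarrow> real) \<Rightarrow> (nat \<Rightarrow> nat \<Rightarrow> real) \<Rightarrow> (nat \<Rightarrow> nat \<Rightarrow> real)
    \<Rightarrow> (nat \<Rightarrow> nat \<Rightarrow> real) \<Rightarrow> nat \<Rightarrow> nat set \<times> nat \<Rightarrow> real" where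
  "Nmat B L Linv M Pi i Dc =
     (if fst Dc = B then (\<Sum>k\<in>B. L k i * Pi k (snd Dc))
      else (\<Sum>k\<in>fst Dc. Mhat B Linv M i k * Pi k (snd Dc)))"

definition Ncols :: "nat set set \<Rightarrow> nat set \<Rightarrow> (nat \<Rightarrow> nat \<Rightarrow> real) \<Rightarrow> nat \<Rightarrow> (nat set \<times> nat) set" where
  "Ncols P B M p = (insert B (nbr_blocks P B M)) \<times> {0..<p}"

text \<open>M_(+), as an n\<times>n matrix in which the rows/columns with index in B stand for the
  coordinates of Q (columns of Q indexed by B); K \<subseteq> B are the indices of the Q_1 columns,
  B - K those of the Q_2 columns; the remaining indices are the original N and W indices.\<close>
definition Mplus :: "nat set set \<Rightarrow> nat set \<Rightarrow> nat set \<Rightarrow> (nat \<Rightarrow> nat \<Rightarrow> real) \<Rightarrow> (nat \<Rightarrow> nat \<Rightarrow> real)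
    \<Rightarrow> (nat \<Rightarrow> nat \<Rightarrow> real) \<Rightarrow> nat \<Rightarrow> nat \<Rightarrow> real" where
  "Mplus P B K Linv M Q i j =
     (let N = nbr_set P B M in
      if i \<in> B \<and> j \<in> B then (if i = j then 1 else 0)
      else if i \<in> K \<and> j \<in> N then (\<Sum>k\<in>B. Q k i * Mhat B Linv M k j)
      else if i \<in> N \<and> j \<in> K then (\<Sum>k\<in>B. Mhat B Linv M k i * Q k j)
      else if i \<notin> B \<and> j \<notin> B then M i j
      else 0)"

definition Bcal :: "nat set \<Rightarrow> (nat \<Rightarrow> nat \<Rightarrow> real) \<Rightarrow> (nat \<Rightarrow> nat \<Rightarrow> real) \<Rightarrow> nat \<Rightarrow> nat \<Rightarrow> real" where
  "Bcal B L Q i j =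
     (if i \<in> B \<and> j \<in> B then (\<Sum>k\<in>B. L i k * Q k j)
      else if i \<notin> B \<and> j \<notin> B then (if i = j then 1 else 0)
      else 0)"

definition Mtilde :: "nat \<Rightarrow> nat set set \<Rightarrow> nat set \<Rightarrow> nat set \<Rightarrow> (nat \<Rightarrow> nat \<Rightarrow> real) \<Rightarrow> (nat \<Rightarrow> nat \<Rightarrow> real)
    \<Rightarrow> (nat \<Rightarrow> nat \<Rightarrow> real) \<Rightarrow> (nat \<Rightarrow> nat \<Rightarrow> real) \<Rightarrow> nat \<Rightarrow> nat \<Rightarrow> real" where
  "Mtilde n P B K L Linv M Q i j =
     (\<Sum>k<n. \<Sum>l<n. Bcal B L Q i k * Mplus P B K Linv M Q k l * Bcal B L Q j l)"

definition Pi_block :: "nat set \<Rightarrow> (nat \<Rightarrow> nat \<Rightarrow> real) \<Rightarrow> nat \<Rightarrow> nat \<Rightarrow> real" where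
  "Pi_block D Pi i j = (if i \<in> D then Pi i j else 0)"

end

theory Submission imports Defs begin

lemma sum_delta_mult: "finite S \<Longrightarrow> a \<in> S \<Longrightarrow> (\<Sum>b\<in>S. f b * (if a = b then 1 else 0)) = (f a :: real)"
proof -
  assume "finite S" "a \<in> S"
  have "(\<Sum>b\<in>S. f b * (if a = b then 1 else 0)) = (\<Sum>b\<in>S. if a = b then f b else 0)" by (rule sum.cong) auto
  also have "\<dots> = f a" using \<open>finite S\<close> \<open>a \<in> S\<close> by (simp add: sum.delta)
  finally show ?thesis .
qed

lemma sum_delta_mult': "finite S \<Longrightarrow> a \<in> S \<Longrightarrow> (\<Sum>b\<in>S. (if b = a then 1 else 0) * f b) = (f a :: real)"
  using sum_delta_mult[of S a f] by (simp add: mult.commute eq_commute)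

lemma swap3: "(\<Sum>k\<in>A. \<Sum>a\<in>B. \<Sum>b\<in>C. f k a b) = (\<Sum>a\<in>B. \<Sum>b\<in>C. \<Sum>k\<in>A. (f k a b :: real))"
proof -
  have "(\<Sum>k\<in>A. \<Sum>a\<in>B. \<Sum>b\<in>C. f k a b) = (\<Sum>a\<in>B. \<Sum>k\<in>A. \<Sum>b\<in>C. f k a b)" by (rule sum.swap)
  also have "\<dots> = (\<Sum>a\<in>B. \<Sum>b\<in>C. \<Sum>k\<in>A. f k a b)" by (rule sum.cong[OF refl], rule sum.swap)
  finally show ?thesis .
qed

locale L31 =
  fixes n p :: nat
    and M Pi L Linv Q :: "nat \<Rightarrow> nat \<Rightarrow> real"
    and P :: "nat set set"
    and B K :: "nat set"
  assumes M_spd: "spd_on {0..<n} M"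
    and part: "partition_of {0..<n} P"
    and B_in: "B \<in> P"
    and L_chol: "\<forall>i\<in>B. \<forall>j\<in>B. M i j = (\<Sum>k\<in>B. L i k * L j k)"
    and Linv_r: "\<forall>i\<in>B. \<forall>j\<in>B. (\<Sum>k\<in>B. L i k * Linv k j) = (if i = j then 1 else 0)"
    and Linv_l: "\<forall>i\<in>B. \<forall>j\<in>B. (\<Sum>k\<in>B. Linv i k * L k j) = (if i = j then 1 else 0)"
    and K_sub: "K \<subseteq> B"
    and Q_orth_cols: "\<forall>k\<in>B. \<forall>l\<in>B. (\<Sum>i\<in>B. Q i k * Q i l) = (if k = l then 1 else 0)"
    and Q_orth_rows: "\<forall>i\<in>B. \<forall>j\<in>B. (\<Sum>k\<in>B. Q i k * Q j k) = (if i = j then 1 else 0)"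
    and Q1_range: "\<forall>v. in_range B (Ncols P B M p) (Nmat B L Linv M Pi) v \<longleftrightarrow> in_range B K Q v"
begin

abbreviation "V \<equiv> {0..<n}"
abbreviation "NN \<equiv> nbr_set P B M"
abbreviation "Mh \<equiv> Mhat B Linv M"
definition "LQ i k = (\<Sum>m\<in>B. L i m * Q m k)"
definition "G i j = (\<Sum>k\<in>K. LQ i k * (\<Sum>m\<in>B. Q m k * Mh m j))"

lemma B_sub: "B \<subseteq> V" using part B_in unfolding partition_of_def by blast
lemma B_lt: "k \<in> B \<Longrightarrow> k < n" using B_sub by auto
lemma finB: "finite B" using B_sub finite_subset by blast
lemma finK: "finite K" using K_sub finB finite_subset by blast
lemma NN_sub: "NN \<subseteq> V" using part unfolding partition_of_def nbr_set_def nbr_blocks_def by blast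
lemma NN_B: "NN \<inter> B = {}" using part B_in unfolding partition_of_def nbr_set_def nbr_blocks_def by blast
lemma Msym: "i \<in> V \<Longrightarrow> j \<in> V \<Longrightarrow> M i j = M j i"
  using M_spd unfolding spd_on_def symmetric_on_def by blast
lemma M_W: assumes "i \<in> B" "j \<in> V" "j \<notin> B" "j \<notin> NN" shows "M i j = 0"
proof -
  obtain D where D: "D \<in> P" "j \<in> D" using part assms(2) unfolding partition_of_def by blast
  have "D \<noteq> B" using D assms(3) by blast
  hence "D \<notin> nbr_blocks P B M" using D assms(4) unfolding nbr_set_def by blast
  thus ?thesis using D \<open>D \<noteq> B\<close> assms(1) unfolding nbr_blocks_def by blast
qed
lemma Mh_W: assumes "m \<in> B" "j \<in> V" "j \<notin> B" "j \<notin> NN" shows "Mh m j = 0"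
  unfolding Mhat_def using M_W[OF _ assms(2-4)] by simp

lemma LQLQ: assumes "i \<in> B" "j \<in> B" shows "(\<Sum>k\<in>B. LQ i k * LQ j k) = M i j"
proof -
  have "(\<Sum>k\<in>B. LQ i k * LQ j k) = (\<Sum>k\<in>B. \<Sum>a\<in>B. \<Sum>b\<in>B. L i a * L j b * (Q a k * Q b k))"
    by (simp add: LQ_def sum_product ac_simps)
  also have "\<dots> = (\<Sum>a\<in>B. \<Sum>b\<in>B. \<Sum>k\<in>B. L i a * L j b * (Q a k * Q b k))"
    by (rule swap3)
  also have "\<dots> = (\<Sum>a\<in>B. \<Sum>b\<in>B. L i a * L j b * (if a = b then 1 else 0))"
    by (simp add: sum_distrib_left[symmetric] Q_orth_rows)
  also have "\<dots> = (\<Sum>a\<in>B. L i a * L j a)"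
    by (rule sum.cong[OF refl]) (simp add: sum_delta_mult finB mult.assoc[symmetric] del: mult_cancel_left1)
  finally show ?thesis using L_chol assms by simp
qed

lemma Bsum: assumes "i \<in> V"
  shows "(\<Sum>k\<in>V. Bcal B L Q i k * f k) = (if i \<in> B then (\<Sum>k\<in>B. LQ i k * f k) else f i)"
proof -
  have V: "V = B \<union> (V - B)" using B_sub by blast
  have "(\<Sum>k\<in>V. Bcal B L Q i k * f k) = (\<Sum>k\<in>B. Bcal B L Q i k * f k) + (\<Sum>k\<in>V - B. Bcal B L Q i k * f k)"
    by (subst V, rule sum.union_disjoint) (auto simp: finB)
  also have "\<dots> = (if i \<in> B then (\<Sum>k\<in>B. LQ i k * f k) else f i)"
  proof (cases "i \<in> B")
    case True thus ?thesis by (simp add: Bcal_def LQ_def)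
  next
    case False
    have "(\<Sum>k\<in>V - B. Bcal B L Q i k * f k) = (\<Sum>k\<in>V - B. (if k = i then 1 else 0) * f k)"
      by (rule sum.cong) (auto simp: Bcal_def False)
    also have "\<dots> = f i" using False assms by (intro sum_delta_mult') auto
    finally show ?thesis using False by (simp add: Bcal_def)
  qed
  finally show ?thesis .
qed

abbreviation "Mp \<equiv> Mplus P B K Linv M Q"
abbreviation "Mt \<equiv> Mtilde n P B K L Linv M Q"

lemma Mp_BB: "k \<in> B \<Longrightarrow> l \<in> B \<Longrightarrow> Mp k l = (if k = l then 1 else 0)"
  by (simp add: Mplus_def)
lemma Mp_BR: "k \<in> B \<Longrightarrow> j \<notin> B \<Longrightarrow> Mp k j = (if k \<in> K \<and> j \<in> NN then (\<Sum>m\<in>B. Q m k * Mh m j) else 0)"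
  using NN_B K_sub by (auto simp add: Mplus_def Let_def)
lemma Mp_RB: "i \<notin> B \<Longrightarrow> l \<in> B \<Longrightarrow> Mp i l = (if i \<in> NN \<and> l \<in> K then (\<Sum>m\<in>B. Q m l * Mh m i) else 0)"
  using NN_B K_sub by (auto simp add: Mplus_def Let_def mult.commute)
lemma Mp_RR: "i \<notin> B \<Longrightarrow> j \<notin> B \<Longrightarrow> Mp i j = M i j"
  using NN_B K_sub by (auto simp add: Mplus_def Let_def)

lemma sumK: "(\<Sum>k\<in>B. if k \<in> K then f k else 0) = (\<Sum>k\<in>K. (f k :: real))"
proof -
  have "{k\<in>B. k \<in> K} = K" using K_sub by blast
  thus ?thesis using sum.inter_filter[OF finB, of f "\<lambda>k. k \<in> K"] by simp
qed

lemma G_W: "i \<in> B \<Longrightarrow> j \<in> V \<Longrightarrow> j \<notin> B \<Longrightarrow> j \<notin> NN \<Longrightarrow> G i j = 0"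
  unfolding G_def using Mh_W by (simp add: K_sub)

lemma BR_sum: assumes "i \<in> B" "j \<in> V" "j \<notin> B" shows "(\<Sum>k\<in>B. LQ i k * Mp k j) = G i j"
proof (cases "j \<in> NN")
  case True
  have "(\<Sum>k\<in>B. LQ i k * Mp k j) = (\<Sum>k\<in>B. if k \<in> K then LQ i k * (\<Sum>m\<in>B. Q m k * Mh m j) else 0)"
    by (rule sum.cong) (auto simp: Mp_BR assms True)
  also have "\<dots> = G i j" unfolding G_def sumK ..
  finally show ?thesis .
next
  case False
  thus ?thesis using G_W[OF assms False] by (simp add: Mp_BR assms)
qed

lemma Mt_eq: assumes i: "i \<in> V" and j: "j \<in> V"
  shows "Mt i j = (if i \<in> B \<and> j \<in> B then M i j else if i \<in> B then G i j else if j \<in> B then G j i else M i j)"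
proof -
  have "Mt i j = (\<Sum>k\<in>V. Bcal B L Q i k * (\<Sum>l\<in>V. Bcal B L Q j l * Mp k l))"
    unfolding Mtilde_def lessThan_atLeast0 by (simp add: sum_distrib_left ac_simps)
  also have "\<dots> = (\<Sum>k\<in>V. Bcal B L Q i k * (if j \<in> B then (\<Sum>l\<in>B. LQ j l * Mp k l) else Mp k j))"
    using Bsum[OF j] by simp
  also have "\<dots> = (if i \<in> B then (\<Sum>k\<in>B. LQ i k * (if j \<in> B then (\<Sum>l\<in>B. LQ j l * Mp k l) else Mp k j))
       else (if j \<in> B then (\<Sum>l\<in>B. LQ j l * Mp i l) else Mp i j))"
    by (rule Bsum[OF i])
  also have "\<dots> = (if i \<in> B \<and> j \<in> B then M i j else if i \<in> B then G i j else if j \<in> B then G j i else M i j)"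
  proof (cases "i \<in> B"; cases "j \<in> B")
    assume a: "i \<in> B" "j \<in> B"
    have "(\<Sum>k\<in>B. LQ i k * (\<Sum>l\<in>B. LQ j l * Mp k l)) = (\<Sum>k\<in>B. LQ i k * LQ j k)"
    proof (rule sum.cong[OF refl])
      fix k assume k: "k \<in> B"
      have "(\<Sum>l\<in>B. LQ j l * Mp k l) = (\<Sum>l\<in>B. LQ j l * (if k = l then 1 else 0))"
        by (rule sum.cong) (auto simp: Mp_BB k)
      also have "\<dots> = LQ j k" using k by (rule sum_delta_mult[OF finB])
      finally show "LQ i k * (\<Sum>l\<in>B. LQ j l * Mp k l) = LQ i k * LQ j k" by simp
    qed
    thus ?thesis using a LQLQ by simp
  next
    assume a: "i \<in> B" "j \<notin> B"
    thus ?thesis using BR_sum[OF a(1) j a(2)] by simp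
  next
    assume a: "i \<notin> B" "j \<in> B"
    have "(\<Sum>l\<in>B. LQ j l * Mp i l) = (\<Sum>l\<in>B. LQ j l * Mp l i)"
      by (rule sum.cong) (auto simp: Mp_BR Mp_RB a)
    thus ?thesis using BR_sum[OF a(2) i a(1)] a by simp
  next
    assume a: "i \<notin> B" "j \<notin> B"
    thus ?thesis by (simp add: Mp_RR)
  qed
  finally show ?thesis .
qed

lemma finP: "finite P"
proof -
  have "P \<subseteq> Pow V" using part unfolding partition_of_def by blast
  thus ?thesis using finite_subset by blast
qed

lemma proj: assumes "in_range B K Q v" "a \<in> B"
  shows "(\<Sum>k\<in>K. Q a k * (\<Sum>m\<in>B. Q m k * v m)) = v a"
proof -
  obtain y where y: "\<forall>m\<in>B. v m = (\<Sum>k\<in>K. Q m k * y k)" using assms(1) unfolding in_range_def by blast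
  have "(\<Sum>m\<in>B. Q m k * v m) = y k" if k: "k \<in> K" for k
  proof -
    have "(\<Sum>m\<in>B. Q m k * v m) = (\<Sum>m\<in>B. \<Sum>k'\<in>K. Q m k * Q m k' * y k')"
      using y by (simp add: sum_distrib_left mult.assoc)
    also have "\<dots> = (\<Sum>k'\<in>K. \<Sum>m\<in>B. Q m k * Q m k' * y k')" by (rule sum.swap)
    also have "\<dots> = (\<Sum>k'\<in>K. y k' * (if k = k' then 1 else 0))"
    proof (rule sum.cong[OF refl])
      fix k' assume k': "k' \<in> K"
      have "(\<Sum>m\<in>B. Q m k * Q m k' * y k') = (\<Sum>m\<in>B. Q m k * Q m k') * y k'" by (simp add: sum_distrib_right)
      also have "\<dots> = (if k = k' then 1 else 0) * y k'"
      proof -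
        have "k \<in> B" "k' \<in> B" using k k' K_sub by auto
        thus ?thesis using Q_orth_cols by simp
      qed
      finally show "(\<Sum>m\<in>B. Q m k * Q m k' * y k') = y k' * (if k = k' then 1 else 0)" by simp
    qed
    also have "\<dots> = y k" by (rule sum_delta_mult[OF finK k])
    finally show ?thesis .
  qed
  hence "(\<Sum>k\<in>K. Q a k * (\<Sum>m\<in>B. Q m k * v m)) = (\<Sum>k\<in>K. Q a k * y k)" by simp
  thus ?thesis using y assms(2) by simp
qed

lemma inrange_col: assumes "D \<in> insert B (nbr_blocks P B M)" "c < p"
  shows "in_range B K Q (\<lambda>i. Nmat B L Linv M Pi i (D, c))"
proof -
  have fin: "finite (Ncols P B M p)" unfolding Ncols_def nbr_blocks_def using finP by auto
  have mem: "(D, c) \<in> Ncols P B M p" unfolding Ncols_def using assms by auto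
  have "in_range B (Ncols P B M p) (Nmat B L Linv M Pi) (\<lambda>i. Nmat B L Linv M Pi i (D, c))"
    unfolding in_range_def
    by (rule exI[of _ "\<lambda>j. if (D, c) = j then 1 else 0"]) (simp add: sum_delta_mult[OF fin mem])
  thus ?thesis using Q1_range by blast
qed

lemma G_range: assumes i: "i \<in> B" and S: "finite S"
    and r: "in_range B K Q (\<lambda>m. \<Sum>j\<in>S. Mh m j * w j)"
  shows "(\<Sum>j\<in>S. G i j * w j) = (\<Sum>j\<in>S. M i j * w j)"
proof -
  define v where "v m = (\<Sum>j\<in>S. Mh m j * w j)" for m
  have "(\<Sum>j\<in>S. G i j * w j) = (\<Sum>j\<in>S. \<Sum>k\<in>K. \<Sum>m\<in>B. LQ i k * (Q m k * (Mh m j * w j)))"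
    unfolding G_def by (simp add: sum_distrib_left sum_distrib_right ac_simps)
  also have "\<dots> = (\<Sum>k\<in>K. \<Sum>m\<in>B. \<Sum>j\<in>S. LQ i k * (Q m k * (Mh m j * w j)))" by (rule swap3)
  also have "\<dots> = (\<Sum>k\<in>K. LQ i k * (\<Sum>m\<in>B. Q m k * v m))"
    unfolding v_def by (simp add: sum_distrib_left)
  also have "\<dots> = (\<Sum>k\<in>K. \<Sum>a\<in>B. L i a * (Q a k * (\<Sum>m\<in>B. Q m k * v m)))"
    unfolding LQ_def by (simp add: sum_distrib_left sum_distrib_right ac_simps)
  also have "\<dots> = (\<Sum>a\<in>B. L i a * (\<Sum>k\<in>K. Q a k * (\<Sum>m\<in>B. Q m k * v m)))"
    by (subst sum.swap) (simp add: sum_distrib_left)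
  also have "\<dots> = (\<Sum>a\<in>B. L i a * v a)"
    using proj r unfolding v_def[symmetric] by (intro sum.cong refl) simp
  also have "\<dots> = (\<Sum>a\<in>B. \<Sum>j\<in>S. \<Sum>b\<in>B. L i a * Linv a b * (M b j * w j))"
    unfolding v_def Mhat_def by (simp add: sum_distrib_left sum_distrib_right ac_simps)
  also have "\<dots> = (\<Sum>j\<in>S. \<Sum>b\<in>B. \<Sum>a\<in>B. L i a * Linv a b * (M b j * w j))"
    by (subst swap3) (rule refl)
  also have "\<dots> = (\<Sum>j\<in>S. \<Sum>b\<in>B. (if i = b then 1 else 0) * (M b j * w j))"
    using Linv_r i by (intro sum.cong refl) (simp add: sum_distrib_right[symmetric])
  also have "\<dots> = (\<Sum>j\<in>S. M i j * w j)"
    using i by (intro sum.cong refl) (simp add: sum_delta_mult'[OF finB] eq_commute[of i])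
  finally show ?thesis .
qed

lemma G_range2: assumes i: "i \<in> V"
    and r: "in_range B K Q (\<lambda>a. \<Sum>j\<in>B. L j a * w j)"
  shows "(\<Sum>j\<in>B. G j i * w j) = (\<Sum>j\<in>B. M i j * w j)"
proof -
  define u where "u a = (\<Sum>j\<in>B. L j a * w j)" for a
  define X where "X k = (\<Sum>m\<in>B. Q m k * Mh m i)" for k
  have LQu: "(\<Sum>j\<in>B. LQ j k * w j) = (\<Sum>a\<in>B. Q a k * u a)" for k
  proof -
    have "(\<Sum>j\<in>B. LQ j k * w j) = (\<Sum>j\<in>B. \<Sum>a\<in>B. Q a k * (L j a * w j))"
      unfolding LQ_def by (simp add: sum_distrib_left sum_distrib_right ac_simps)
    also have "\<dots> = (\<Sum>a\<in>B. \<Sum>j\<in>B. Q a k * (L j a * w j))" by (rule sum.swap)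
    also have "\<dots> = (\<Sum>a\<in>B. Q a k * u a)" unfolding u_def by (simp add: sum_distrib_left)
    finally show ?thesis .
  qed
  have "(\<Sum>j\<in>B. G j i * w j) = (\<Sum>j\<in>B. \<Sum>k\<in>K. (LQ j k * w j) * X k)"
    unfolding G_def X_def by (simp add: sum_distrib_left sum_distrib_right ac_simps)
  also have "\<dots> = (\<Sum>k\<in>K. (\<Sum>j\<in>B. LQ j k * w j) * X k)"
    by (subst sum.swap) (simp add: sum_distrib_right)
  also have "\<dots> = (\<Sum>k\<in>K. \<Sum>m\<in>B. Mh m i * (Q m k * (\<Sum>a\<in>B. Q a k * u a)))"
    unfolding LQu X_def by (simp add: sum_distrib_left sum_distrib_right ac_simps)
  also have "\<dots> = (\<Sum>m\<in>B. Mh m i * (\<Sum>k\<in>K. Q m k * (\<Sum>a\<in>B. Q a k * u a)))"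
    by (subst sum.swap) (simp add: sum_distrib_left)
  also have "\<dots> = (\<Sum>m\<in>B. Mh m i * u m)"
    using proj r unfolding u_def[symmetric] by (intro sum.cong refl) simp
  also have "\<dots> = (\<Sum>m\<in>B. \<Sum>b\<in>B. \<Sum>j\<in>B. L j m * Linv m b * (M b i * w j))"
    unfolding u_def Mhat_def by (simp add: sum_distrib_left sum_distrib_right ac_simps)
  also have "\<dots> = (\<Sum>b\<in>B. \<Sum>j\<in>B. \<Sum>m\<in>B. L j m * Linv m b * (M b i * w j))"
    by (rule swap3)
  also have "\<dots> = (\<Sum>b\<in>B. \<Sum>j\<in>B. (if j = b then 1 else 0) * (M b i * w j))"
    using Linv_r by (intro sum.cong refl) (simp add: sum_distrib_right[symmetric])
  also have "\<dots> = (\<Sum>j\<in>B. M j i * w j)"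
    by (intro sum.cong refl) (simp add: sum_delta_mult'[OF finB])
  also have "\<dots> = (\<Sum>j\<in>B. M i j * w j)"
    using B_sub i Msym by (intro sum.cong refl) auto
  finally show ?thesis .
qed

lemma sum_block: assumes "D \<in> P"
  shows "(\<Sum>k<n. f k * Pi_block D Pi k c) = (\<Sum>k\<in>D. f k * Pi k c)"
proof -
  have DV: "D \<subseteq> V" using part assms unfolding partition_of_def by blast
  have "(\<Sum>k<n. f k * Pi_block D Pi k c) = (\<Sum>k\<in>V. if k \<in> D then f k * Pi k c else 0)"
    unfolding lessThan_atLeast0 Pi_block_def by (intro sum.cong refl) auto
  also have "\<dots> = (\<Sum>k\<in>V \<inter> D. f k * Pi k c)" by (rule sum.inter_restrict[symmetric]) simp
  also have "V \<inter> D = D" using DV by blast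
  finally show ?thesis .
qed

lemma Mt_BB: "i \<in> B \<Longrightarrow> j \<in> B \<Longrightarrow> Mt i j = M i j" using Mt_eq[of i j] B_lt by auto
lemma Mt_BR: "i \<in> B \<Longrightarrow> j \<in> V \<Longrightarrow> j \<notin> B \<Longrightarrow> Mt i j = G i j" using Mt_eq[of i j] B_lt by auto
lemma Mt_RB: "i \<in> V \<Longrightarrow> i \<notin> B \<Longrightarrow> j \<in> B \<Longrightarrow> Mt i j = G j i" using Mt_eq[of i j] B_lt by auto
lemma Mt_RR: "i \<in> V \<Longrightarrow> i \<notin> B \<Longrightarrow> j \<in> V \<Longrightarrow> j \<notin> B \<Longrightarrow> Mt i j = M i j" using Mt_eq[of i j] B_lt by auto

lemma claim1: assumes D: "D \<in> P" and i: "i < n" and c: "c < p"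
  shows "(\<Sum>k<n. M i k * Pi_block D Pi k c) = (\<Sum>k<n. Mt i k * Pi_block D Pi k c)"
proof -
  have DV: "D \<subseteq> V" using part D unfolding partition_of_def by blast
  have finD: "finite D" using DV finite_subset by blast
  have iV: "i \<in> V" using i by simp
  have Dn: "\<And>k. k \<in> D \<Longrightarrow> k < n" using DV by auto
  have DB: "D \<noteq> B \<Longrightarrow> D \<inter> B = {}" using part D B_in unfolding partition_of_def by blast
  have "(\<Sum>k\<in>D. M i k * Pi k c) = (\<Sum>k\<in>D. Mt i k * Pi k c)"
  proof (cases "i \<in> B")
    case iB: True
    show ?thesis
    proof (cases "D = B")
      case True
      thus ?thesis using iB B_sub iV by (intro sum.cong refl) (auto simp: Mt_BB Mt_BR Mt_RB Mt_RR Dn B_lt)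
    next
      case DnB: False
      show ?thesis
      proof (cases "D \<in> nbr_blocks P B M")
        case True
        have r: "in_range B K Q (\<lambda>m. \<Sum>j\<in>D. Mh m j * Pi j c)"
          using inrange_col[of D c] True c DnB by (simp add: Nmat_def)
        have "(\<Sum>k\<in>D. Mt i k * Pi k c) = (\<Sum>k\<in>D. G i k * Pi k c)"
        proof (rule sum.cong[OF refl])
          fix k assume k: "k \<in> D"
          hence "k \<notin> B" "k \<in> V" using DB[OF DnB] Dn by auto
          thus "Mt i k * Pi k c = G i k * Pi k c" using Mt_BR iB by simp
        qed
        also have "\<dots> = (\<Sum>k\<in>D. M i k * Pi k c)" by (rule G_range[OF iB finD r])
        finally show ?thesis by simp
      next
        case False
        have kN: "k \<notin> NN" if "k \<in> D" for k
        proof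
          assume "k \<in> NN"
          then obtain E where E: "E \<in> nbr_blocks P B M" "k \<in> E" unfolding nbr_set_def by blast
          have "E \<in> P" using E unfolding nbr_blocks_def by blast
          hence "E = D" using part D E that unfolding partition_of_def by blast
          thus False using E False by simp
        qed
        have "M i k * Pi k c = Mt i k * Pi k c" if k: "k \<in> D" for k
        proof -
          have "k \<notin> B" "k \<in> V" "k \<notin> NN" using DB[OF DnB] Dn kN k by auto
          thus ?thesis using Mt_BR[OF iB] M_W[OF iB] G_W[OF iB] by simp
        qed
        thus ?thesis by (rule sum.cong[OF refl])
      qed
    qed
  next
    case iB: False
    show ?thesis
    proof (cases "D = B")
      case DnB: False
      have "M i k * Pi k c = Mt i k * Pi k c" if k: "k \<in> D" for k
      proof -
        have "k \<notin> B" "k \<in> V" using DB[OF DnB] Dn k by auto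
        thus ?thesis using Mt_RR[OF iV iB] by simp
      qed
      thus ?thesis by (rule sum.cong[OF refl])
    next
      case DB': True
      show ?thesis
      proof (cases "i \<in> NN")
        case True
        have r: "in_range B K Q (\<lambda>a. \<Sum>j\<in>B. L j a * Pi j c)"
          using inrange_col[of B c] c by (simp add: Nmat_def)
        have "(\<Sum>k\<in>D. Mt i k * Pi k c) = (\<Sum>k\<in>B. G k i * Pi k c)"
          using DB' B_sub iB iV by (intro sum.cong refl) (auto simp: Mt_BB Mt_BR Mt_RB Mt_RR Dn B_lt)
        also have "\<dots> = (\<Sum>k\<in>B. M i k * Pi k c)" by (rule G_range2[OF iV r])
        finally show ?thesis using DB' by simp
      next
        case False
        have "M i k * Pi k c = Mt i k * Pi k c" if k: "k \<in> D" for k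
        proof -
          have kB: "k \<in> B" "k \<in> V" using DB' k B_lt by auto
          have "M i k = M k i" using Msym kB iV by simp
          also have "\<dots> = 0" using M_W[OF kB(1) iV iB False] .
          finally show ?thesis using Mt_RB[OF iV iB kB(1)] G_W[OF kB(1) iV iB False] by simp
        qed
        thus ?thesis by (rule sum.cong[OF refl])
      qed
    qed
  qed
  thus ?thesis using sum_block[OF D] by simp
qed

abbreviation "R \<equiv> V - B"

lemma quad_split: assumes sym: "\<And>i j. i \<in> V \<Longrightarrow> j \<in> V \<Longrightarrow> A i j = A j i"
  shows "(\<Sum>i\<in>V. \<Sum>j\<in>V. x i * A i j * x j) =
     (\<Sum>i\<in>B. \<Sum>j\<in>B. x i * A i j * x j) + 2 * (\<Sum>i\<in>B. \<Sum>j\<in>R. x i * A i j * (x j :: real))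
     + (\<Sum>i\<in>R. \<Sum>j\<in>R. x i * A i j * x j)"
proof -
  have sp: "\<And>g. (\<Sum>i\<in>V. g i) = (\<Sum>i\<in>B. g i) + (\<Sum>i\<in>R. (g i :: real))"
    using sum.subset_diff[OF B_sub, of _] by (simp add: add.commute)
  have RB: "(\<Sum>i\<in>R. \<Sum>j\<in>B. x i * A i j * x j) = (\<Sum>i\<in>B. \<Sum>j\<in>R. x i * A i j * x j)"
  proof -
    have "(\<Sum>i\<in>R. \<Sum>j\<in>B. x i * A i j * x j) = (\<Sum>j\<in>B. \<Sum>i\<in>R. x i * A i j * x j)" by (rule sum.swap)
    also have "\<dots> = (\<Sum>j\<in>B. \<Sum>i\<in>R. x j * A j i * x i)"
      using B_sub by (intro sum.cong refl) (auto simp: sym[of _ "_"])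
    finally show ?thesis .
  qed
  have "(\<Sum>i\<in>V. \<Sum>j\<in>V. x i * A i j * x j) = (\<Sum>i\<in>B. \<Sum>j\<in>B. x i * A i j * x j) + (\<Sum>i\<in>B. \<Sum>j\<in>R. x i * A i j * x j)
      + ((\<Sum>i\<in>R. \<Sum>j\<in>B. x i * A i j * x j) + (\<Sum>i\<in>R. \<Sum>j\<in>R. x i * A i j * x j))"
    by (simp only: sp sum.distrib)
  thus ?thesis unfolding RB by simp
qed

definition "av x m = (\<Sum>i\<in>B. L i m * x i)"
definition "hv x m = (\<Sum>j\<in>R. Mh m j * x j)"
definition "cv x k = (\<Sum>b\<in>B. Q b k * hv x b)"
definition "pv x m = (\<Sum>k\<in>K. Q m k * cv x k)"

lemma C1: "(\<Sum>i\<in>B. \<Sum>j\<in>B. x i * M i j * x j) = (\<Sum>m\<in>B. av x m * av x m)"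
proof -
  have "(\<Sum>i\<in>B. \<Sum>j\<in>B. x i * M i j * x j) = (\<Sum>i\<in>B. \<Sum>j\<in>B. \<Sum>m\<in>B. L i m * x i * (L j m * x j))"
    using L_chol by (intro sum.cong refl) (simp add: sum_distrib_left sum_distrib_right ac_simps)
  also have "\<dots> = (\<Sum>m\<in>B. \<Sum>i\<in>B. \<Sum>j\<in>B. L i m * x i * (L j m * x j))" by (rule swap3[symmetric])
  also have "\<dots> = (\<Sum>m\<in>B. av x m * av x m)" unfolding av_def by (simp add: sum_product)
  finally show ?thesis .
qed

lemma Lhv: assumes i: "i \<in> B" shows "(\<Sum>m\<in>B. L i m * hv x m) = (\<Sum>j\<in>R. M i j * x j)"
proof -
  have "(\<Sum>m\<in>B. L i m * hv x m) = (\<Sum>m\<in>B. \<Sum>j\<in>R. \<Sum>b\<in>B. L i m * Linv m b * (M b j * x j))"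
    unfolding hv_def Mhat_def by (simp add: sum_distrib_left sum_distrib_right ac_simps)
  also have "\<dots> = (\<Sum>j\<in>R. \<Sum>b\<in>B. \<Sum>m\<in>B. L i m * Linv m b * (M b j * x j))"
    by (rule swap3)
  also have "\<dots> = (\<Sum>j\<in>R. \<Sum>b\<in>B. (if i = b then 1 else 0) * (M b j * x j))"
    using Linv_r i by (intro sum.cong refl) (simp add: sum_distrib_right[symmetric])
  also have "\<dots> = (\<Sum>j\<in>R. M i j * x j)"
    using i by (intro sum.cong refl) (simp add: sum_delta_mult'[OF finB] eq_commute[of i])
  finally show ?thesis .
qed

lemma C2: "(\<Sum>i\<in>B. \<Sum>j\<in>R. x i * M i j * x j) = (\<Sum>m\<in>B. av x m * hv x m)"
proof -
  have "(\<Sum>m\<in>B. av x m * hv x m) = (\<Sum>m\<in>B. \<Sum>i\<in>B. x i * (L i m * hv x m))"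
    unfolding av_def by (simp add: sum_distrib_left sum_distrib_right ac_simps)
  also have "\<dots> = (\<Sum>i\<in>B. x i * (\<Sum>m\<in>B. L i m * hv x m))"
    by (subst sum.swap) (simp add: sum_distrib_left)
  also have "\<dots> = (\<Sum>i\<in>B. \<Sum>j\<in>R. x i * M i j * x j)"
    by (intro sum.cong refl) (simp add: Lhv sum_distrib_left ac_simps)
  finally show ?thesis by simp
qed

lemma C3: "(\<Sum>i\<in>B. \<Sum>j\<in>R. x i * G i j * x j) = (\<Sum>m\<in>B. av x m * pv x m)"
proof -
  have Gx: "(\<Sum>j\<in>R. G i j * x j) = (\<Sum>k\<in>K. LQ i k * cv x k)" for i
  proof -
    have "(\<Sum>j\<in>R. G i j * x j) = (\<Sum>j\<in>R. \<Sum>k\<in>K. \<Sum>m\<in>B. LQ i k * (Q m k * (Mh m j * x j)))"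
      unfolding G_def by (simp add: sum_distrib_left sum_distrib_right ac_simps)
    also have "\<dots> = (\<Sum>k\<in>K. \<Sum>m\<in>B. \<Sum>j\<in>R. LQ i k * (Q m k * (Mh m j * x j)))" by (rule swap3)
    also have "\<dots> = (\<Sum>k\<in>K. LQ i k * cv x k)"
      unfolding cv_def hv_def by (simp add: sum_distrib_left)
    finally show ?thesis .
  qed
  have LQa: "(\<Sum>i\<in>B. x i * LQ i k) = (\<Sum>a\<in>B. Q a k * av x a)" for k
  proof -
    have "(\<Sum>i\<in>B. x i * LQ i k) = (\<Sum>i\<in>B. \<Sum>a\<in>B. Q a k * (L i a * x i))"
      unfolding LQ_def by (simp add: sum_distrib_left sum_distrib_right ac_simps)
    also have "\<dots> = (\<Sum>a\<in>B. \<Sum>i\<in>B. Q a k * (L i a * x i))" by (rule sum.swap)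
    also have "\<dots> = (\<Sum>a\<in>B. Q a k * av x a)" unfolding av_def by (simp add: sum_distrib_left)
    finally show ?thesis .
  qed
  have "(\<Sum>i\<in>B. \<Sum>j\<in>R. x i * G i j * x j) = (\<Sum>i\<in>B. x i * (\<Sum>j\<in>R. G i j * x j))"
    by (simp add: sum_distrib_left ac_simps)
  also have "\<dots> = (\<Sum>i\<in>B. \<Sum>k\<in>K. x i * LQ i k * cv x k)"
    unfolding Gx by (simp add: sum_distrib_left ac_simps)
  also have "\<dots> = (\<Sum>k\<in>K. (\<Sum>i\<in>B. x i * LQ i k) * cv x k)"
    by (subst sum.swap) (simp add: sum_distrib_right)
  also have "\<dots> = (\<Sum>k\<in>K. \<Sum>a\<in>B. av x a * (Q a k * cv x k))"
    unfolding LQa sum_distrib_right by (intro sum.cong refl) (simp add: ac_simps)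
  also have "\<dots> = (\<Sum>a\<in>B. av x a * pv x a)"
    unfolding pv_def by (subst sum.swap) (simp add: sum_distrib_left)
  finally show ?thesis .
qed

lemma orth_norm: assumes "S \<subseteq> B"
  shows "(\<Sum>m\<in>B. (\<Sum>k\<in>S. Q m k * f k)^2) = (\<Sum>k\<in>S. (f k)^2)"
proof -
  have finS: "finite S" using assms finB finite_subset by blast
  have "(\<Sum>m\<in>B. (\<Sum>k\<in>S. Q m k * f k)^2) = (\<Sum>m\<in>B. \<Sum>k\<in>S. \<Sum>k'\<in>S. f k * f k' * (Q m k * Q m k'))"
    by (simp add: power2_eq_square sum_product ac_simps)
  also have "\<dots> = (\<Sum>k\<in>S. \<Sum>k'\<in>S. \<Sum>m\<in>B. f k * f k' * (Q m k * Q m k'))" by (rule swap3)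
  also have "\<dots> = (\<Sum>k\<in>S. \<Sum>k'\<in>S. f k * f k' * (if k = k' then 1 else 0))"
  proof (intro sum.cong refl)
    fix k k' assume "k \<in> S" "k' \<in> S"
    hence "k \<in> B" "k' \<in> B" using assms by auto
    thus "(\<Sum>m\<in>B. f k * f k' * (Q m k * Q m k')) = f k * f k' * (if k = k' then 1 else 0)"
      using Q_orth_cols by (simp add: sum_distrib_left[symmetric])
  qed
  also have "\<dots> = (\<Sum>k\<in>S. (f k)^2)"
  proof (intro sum.cong refl)
    fix k assume k: "k \<in> S"
    have "(\<Sum>k'\<in>S. f k * f k' * (if k = k' then 1 else 0)) = f k * f k"
      using sum_delta_mult[OF finS k, of "\<lambda>k'. f k * f k'"] .
    thus "(\<Sum>k'\<in>S. f k * f k' * (if k = k' then 1 else 0)) = (f k)^2" by (simp add: power2_eq_square)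
  qed
  finally show ?thesis .
qed

lemma h_Q: assumes m: "m \<in> B" shows "hv x m = (\<Sum>k\<in>B. Q m k * cv x k)"
proof -
  have "(\<Sum>k\<in>B. Q m k * cv x k) = (\<Sum>k\<in>B. \<Sum>b\<in>B. hv x b * (Q m k * Q b k))"
    unfolding cv_def by (simp add: sum_distrib_left ac_simps)
  also have "\<dots> = (\<Sum>b\<in>B. \<Sum>k\<in>B. hv x b * (Q m k * Q b k))" by (rule sum.swap)
  also have "\<dots> = (\<Sum>b\<in>B. hv x b * (if m = b then 1 else 0))"
    using Q_orth_rows m by (intro sum.cong refl) (simp add: sum_distrib_left[symmetric])
  also have "\<dots> = hv x m" by (rule sum_delta_mult[OF finB m])
  finally show ?thesis by simp
qed

lemma C5: "(\<Sum>m\<in>B. (pv x m)^2) \<le> (\<Sum>m\<in>B. (hv x m)^2)"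
proof -
  have "(\<Sum>m\<in>B. (pv x m)^2) = (\<Sum>k\<in>K. (cv x k)^2)" unfolding pv_def by (rule orth_norm[OF K_sub])
  also have "\<dots> \<le> (\<Sum>k\<in>B. (cv x k)^2)" by (rule sum_mono2[OF finB K_sub]) simp
  also have "\<dots> = (\<Sum>m\<in>B. (\<Sum>k\<in>B. Q m k * cv x k)^2)" by (rule orth_norm[symmetric]) simp
  also have "\<dots> = (\<Sum>m\<in>B. (hv x m)^2)" using h_Q by simp
  finally show ?thesis .
qed

lemma C7: assumes i: "i \<in> B" shows "(\<Sum>m\<in>B. Linv m i * av x m) = x i"
proof -
  have "(\<Sum>m\<in>B. Linv m i * av x m) = (\<Sum>m\<in>B. \<Sum>j\<in>B. x j * (L j m * Linv m i))"
    unfolding av_def by (simp add: sum_distrib_left ac_simps)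
  also have "\<dots> = (\<Sum>j\<in>B. \<Sum>m\<in>B. x j * (L j m * Linv m i))" by (rule sum.swap)
  also have "\<dots> = (\<Sum>j\<in>B. x j * (if j = i then 1 else 0))"
    using Linv_r i by (intro sum.cong refl) (simp add: sum_distrib_left[symmetric])
  also have "\<dots> = x i" using sum_delta_mult[OF finB i, of x] by (simp add: eq_commute)
  finally show ?thesis .
qed

lemma C6: assumes "\<And>i. i \<in> B \<Longrightarrow> y i = - (\<Sum>b\<in>B. Linv b i * h b)" and m: "m \<in> B"
  shows "av y m = - h m"
proof -
  have "av y m = - (\<Sum>i\<in>B. \<Sum>b\<in>B. h b * (Linv b i * L i m))"
    unfolding av_def using assms(1) by (simp add: sum_distrib_left sum_negf ac_simps)
  also have "\<dots> = - (\<Sum>b\<in>B. \<Sum>i\<in>B. h b * (Linv b i * L i m))" by (subst sum.swap) rule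
  also have "\<dots> = - (\<Sum>b\<in>B. h b * (if b = m then 1 else 0))"
    using Linv_l m by (simp add: sum_distrib_left[symmetric])
  also have "\<dots> = - h m" using sum_delta_mult[OF finB m, of h] by (simp add: eq_commute)
  finally show ?thesis .
qed

lemma Mt_sym: "i \<in> V \<Longrightarrow> j \<in> V \<Longrightarrow> Mt i j = Mt j i"
  using Mt_eq[of i j] Mt_eq[of j i] Msym[of i j] by auto

lemma quadM: "(\<Sum>i\<in>V. \<Sum>j\<in>V. x i * M i j * x j) =
    (\<Sum>m\<in>B. av x m * av x m) + 2 * (\<Sum>m\<in>B. av x m * hv x m) + (\<Sum>i\<in>R. \<Sum>j\<in>R. x i * M i j * x j)"
  using quad_split[of M x] Msym C1 C2 by simp

lemma quadMt: "(\<Sum>i\<in>V. \<Sum>j\<in>V. x i * Mt i j * x j) =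
    (\<Sum>m\<in>B. av x m * av x m) + 2 * (\<Sum>m\<in>B. av x m * pv x m) + (\<Sum>i\<in>R. \<Sum>j\<in>R. x i * M i j * x j)"
proof -
  have 1: "(\<Sum>i\<in>B. \<Sum>j\<in>B. x i * Mt i j * x j) = (\<Sum>i\<in>B. \<Sum>j\<in>B. x i * M i j * x j)"
    by (intro sum.cong refl) (simp add: Mt_BB)
  have 2: "(\<Sum>i\<in>B. \<Sum>j\<in>R. x i * Mt i j * x j) = (\<Sum>i\<in>B. \<Sum>j\<in>R. x i * G i j * x j)"
    by (intro sum.cong refl) (simp add: Mt_BR)
  have 3: "(\<Sum>i\<in>R. \<Sum>j\<in>R. x i * Mt i j * x j) = (\<Sum>i\<in>R. \<Sum>j\<in>R. x i * M i j * x j)"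
    by (intro sum.cong refl) (simp add: Mt_RR)
  show ?thesis using quad_split[of Mt x] Mt_sym 1 2 3 C1 C3 by simp
qed

lemma sq_expand: "(\<Sum>m\<in>B. (f m + g m)^2) = (\<Sum>m\<in>B. f m * f m) + 2 * (\<Sum>m\<in>B. f m * g m) + (\<Sum>m\<in>B. (g m :: real)^2)"
proof -
  have "(\<Sum>m\<in>B. (f m + g m)^2) = (\<Sum>m\<in>B. f m * f m + 2 * (f m * g m) + (g m)^2)"
    by (intro sum.cong refl) (simp add: power2_eq_square algebra_simps)
  thus ?thesis by (simp add: sum.distrib sum_distrib_left)
qed

lemma claim2: "spd_on V Mt"
  unfolding spd_on_def symmetric_on_def
proof (intro conjI allI impI ballI)
  fix i j assume "i \<in> V" "j \<in> V" thus "Mt i j = Mt j i" by (rule Mt_sym)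
next
  fix x :: "nat \<Rightarrow> real" assume ex: "\<exists>i\<in>V. x i \<noteq> 0"
  define qR where "qR = (\<Sum>i\<in>R. \<Sum>j\<in>R. x i * M i j * x j)"
  have qT: "(\<Sum>i\<in>V. \<Sum>j\<in>V. x i * Mt i j * x j) =
      (\<Sum>m\<in>B. (av x m + pv x m)^2) - (\<Sum>m\<in>B. (pv x m)^2) + qR"
    unfolding quadMt sq_expand qR_def by simp
  show "0 < (\<Sum>i\<in>V. \<Sum>j\<in>V. x i * Mt i j * x j)"
  proof (cases "\<exists>i\<in>R. x i \<noteq> 0")
    case True
    define y where "y i = (if i \<in> B then - (\<Sum>b\<in>B. Linv b i * hv x b) else x i)" for i
    have ay: "av y m = - hv x m" if "m \<in> B" for m
      by (rule C6[OF _ that]) (simp add: y_def)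
    have hy: "hv y m = hv x m" for m unfolding hv_def y_def by (intro sum.cong refl) auto
    have qy: "(\<Sum>i\<in>R. \<Sum>j\<in>R. y i * M i j * y j) = qR" unfolding qR_def y_def by (intro sum.cong refl) auto
    have "\<exists>i\<in>V. y i \<noteq> 0" using True by (auto simp: y_def)
    hence "0 < (\<Sum>i\<in>V. \<Sum>j\<in>V. y i * M i j * y j)" using M_spd unfolding spd_on_def by blast
    also have "(\<Sum>i\<in>V. \<Sum>j\<in>V. y i * M i j * y j) = qR - (\<Sum>m\<in>B. (hv x m)^2)"
    proof -
      have "(\<Sum>m\<in>B. av y m * av y m) = (\<Sum>m\<in>B. (hv x m)^2)"
        using ay by (intro sum.cong refl) (simp add: power2_eq_square)
      moreover have "(\<Sum>m\<in>B. av y m * hv y m) = - (\<Sum>m\<in>B. (hv x m)^2)"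
        using ay hy by (simp add: power2_eq_square sum_negf[symmetric])
      ultimately show ?thesis unfolding quadM qy by simp
    qed
    finally have "(\<Sum>m\<in>B. (hv x m)^2) < qR" by simp
    moreover have "0 \<le> (\<Sum>m\<in>B. (av x m + pv x m)^2)" by (simp add: sum_nonneg)
    ultimately show ?thesis unfolding qT using C5[of x] by linarith
  next
    case False
    hence xR: "\<And>i. i \<in> R \<Longrightarrow> x i = 0" by blast
    have h0: "hv x m = 0" for m unfolding hv_def using xR by simp
    have p0: "pv x m = 0" for m unfolding pv_def cv_def using h0 by simp
    have q0: "qR = 0" unfolding qR_def using xR by simp
    obtain i where i: "i \<in> B" "x i \<noteq> 0" using ex False by auto
    have "\<exists>m\<in>B. av x m \<noteq> 0"
    proof (rule ccontr)
      assume "\<not> ?thesis"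
      hence "(\<Sum>m\<in>B. Linv m i * av x m) = 0" by simp
      thus False using C7[OF i(1)] i(2) by simp
    qed
    then obtain m where m: "m \<in> B" "av x m \<noteq> 0" by blast
    have "0 < (\<Sum>m\<in>B. (av x m + pv x m)^2)"
      by (rule sum_pos2[OF finB m(1)]) (use m(2) p0 in auto)
    thus ?thesis unfolding qT q0 using p0 by simp
  qed
qed

end

theorem lemma3p1:
  fixes n p :: nat
    and M Pi L Linv Q :: "nat \<Rightarrow> nat \<Rightarrow> real"
    and P :: "nat set set"
    and B K :: "nat set"
  assumes M_spd: "spd_on {0..<n} M"
    and part: "partition_of {0..<n} P"
    and B_in: "B \<in> P"
    and L_chol: "\<forall>i\<in>B. \<forall>j\<in>B. M i j = (\<Sum>k\<in>B. L i k * L j k)"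
    and L_lower: "\<forall>i\<in>B. \<forall>j\<in>B. i < j \<longrightarrow> L i j = 0"
    and L_diag: "\<forall>i\<in>B. L i i > 0"
    and Linv_r: "\<forall>i\<in>B. \<forall>j\<in>B. (\<Sum>k\<in>B. L i k * Linv k j) = (if i = j then 1 else 0)"
    and Linv_l: "\<forall>i\<in>B. \<forall>j\<in>B. (\<Sum>k\<in>B. Linv i k * L k j) = (if i = j then 1 else 0)"
    and K_sub: "K \<subseteq> B"
    and Q_orth_cols: "\<forall>k\<in>B. \<forall>l\<in>B. (\<Sum>i\<in>B. Q i k * Q i l) = (if k = l then 1 else 0)"
    and Q_orth_rows: "\<forall>i\<in>B. \<forall>j\<in>B. (\<Sum>k\<in>B. Q i k * Q j k) = (if i = j then 1 else 0)"
    and Q1_range: "\<forall>v. in_range B (Ncols P B M p) (Nmat B L Linv M Pi) v \<longleftrightarrow> in_range B K Q v"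
  shows "(\<forall>D\<in>P. \<forall>i<n. \<forall>c<p.
            (\<Sum>k<n. M i k * Pi_block D Pi k c)
          = (\<Sum>k<n. Mtilde n P B K L Linv M Q i k * Pi_block D Pi k c))
       \<and> spd_on {0..<n} (Mtilde n P B K L Linv M Q)"
proof -
  interpret L31 n p M Pi L Linv Q P B K
    by (unfold_locales; fact)
  show ?thesis using claim1 claim2 by blast
qed

end
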